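(* Let $\Sigma=(X,\mathcal D,\phi)$ be an RFC system. If there is a bounded set $\mathcal A\subset X$ such that $\Sigma$ possesses a non-coercive Lyapunov function with respect to $\mathcal A$, then $\Sigma$ is practically UGAS, i.e. there exist $\beta\in\mathcal{KL}$ and $c>0$ such that $\|\phi(t,x,d)\|\le\beta(\|x\|,t)+c$ for all $x\in X$, $d\in\mathcal D$, $t\ge0$.
   Context: $\mathbb R_+=[0,\infty)$. A system is a triple $\Sigma=(X,\mathcal D,\phi)$ where $(X,\|\cdot\|)$ is a normed linear space; $D$ is a nonempty subset of some normed linear space; $\mathcal D$ is a set of functions $d:\mathbb R_+\to D$ closed under time shifts $d\mapsto d(\cdot+\tau)$, $\tau\ge0$, and under concatenation ($d(s)=d_1(s)$ for $s\in[0,t]$, $d(s)=d_2(s-t)$ for $s>t$, any $d_1,d_2\in\mathcal D$, $t>0$); and $\phi:\mathbb R_+\times X\times\mathcal D\to X$ is an everywhere defined map with $\phi(0,x,d)=x$; $\phi(t,x,d)=\phi(t,x,\tilde d)$ whenever $d=\tilde d$ on $[0,t]$; $t\mapsto\phi(t,x,d)$ continuous; and $\phi(h,\phi(t,x,d),d(t+\cdot))=\phi(t+h,x,d)$ for all $t,h\ge0$. $\Sigma$ is RFC if for all $C,\tau>0$: $\sup\{\|\phi(t,x,d)\|:\|x\|\le C,d\in\mathcal D,t\in[0,\tau]\}<\infty$. $\|x\|_{\mathcal A}=\inf_{y\in\mathcal A}\|x-y\|$. $\mathcal K$: continuous strictly increasing $\gamma:\mathbb R_+\to\mathbb R_+$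 with $\gamma(0)=0$; $\mathcal K_\infty$: unbounded elements of $\mathcal K$; $\mathcal{KL}$: continuous $\beta:\mathbb R_+^2\to\mathbb R_+$ with $\beta(\cdot,t)\in\mathcal K$ for all $t$ and $\beta(r,\cdot)$ strictly decreasing to $0$ for all $r>0$. For continuous $V:X\to\mathbb R$, $x\in X$, $d\in\mathcal D$, define the Dini derivative $\dot V_d(x)=\liminf_{t\to0^+}\frac1t\big(V(\phi(t,x,d))-V(x)\big)$. A continuous $V:X\to\mathbb R_+$ is a non-coercive Lyapunov function for $\Sigma$ w.r.t. a bounded set $\mathcal A$ if $V(x)=0$ for $x\in\mathcal A$ and there are $\psi_2\in\mathcal K_\infty$, $\alpha\in\mathcal K$ with $0<V(x)\le\psi_2(\|x\|_{\mathcal A})$ for all $x\in X\setminus\mathcal A$ and $\dot V_d(x)\le-\alpha(\|x\|_{\mathcal A})$ for all $x\in X\setminus\mathcal A$, $d\in\mathcal D$. *)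

theory Defs
  imports "HOL-Analysis.Analysis"
begin

definition class_K :: "(real \<Rightarrow> real) \<Rightarrow> bool" where
  "class_K \<gamma> \<longleftrightarrow> continuous_on {0..} \<gamma> \<and> strict_mono_on {0..} \<gamma> \<and> \<gamma> 0 = 0"

definition class_K_inf :: "(real \<Rightarrow> real) \<Rightarrow> bool" where
  "class_K_inf \<gamma> \<longleftrightarrow> class_K \<gamma> \<and> (\<forall>M. \<exists>r\<ge>0. \<gamma> r > M)"

definition class_KL :: "(real \<Rightarrow> real \<Rightarrow> real) \<Rightarrow> bool" where
  "class_KL \<beta> \<longleftrightarrow>
     continuous_on ({0..} \<times> {0..}) (\<lambda>(r, t). \<beta> r t) \<and>
     (\<forall>t\<ge>0. class_K (\<lambda>r. \<beta> r t)) \<and>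
     (\<forall>r>0. (\<forall>s t. 0 \<le> s \<longrightarrow> s < t \<longrightarrow> \<beta> r t < \<beta> r s) \<and>
             ((\<lambda>t. \<beta> r t) \<longlongrightarrow> 0) at_top)"

text \<open>Systems. Inputs are total functions real => 'd; only their values on [0,inf) matter.
  DS is the input set, Dset the value set D, phi the flow.\<close>

definition is_system ::
  "'d::real_normed_vector set \<Rightarrow> (real \<Rightarrow> 'd) set \<Rightarrow> (real \<Rightarrow> 'x::real_normed_vector \<Rightarrow> (real \<Rightarrow> 'd) \<Rightarrow> 'x) \<Rightarrow> bool"
where
  "is_system Dset DS \<phi> \<longleftrightarrow>
     Dset \<noteq> {} \<and>
     (\<forall>d\<in>DS. \<forall>s\<ge>0. d s \<in> Dset) \<and>
     (\<forall>d\<in>DS. \<forall>\<tau>\<ge>0. (\<lambda>s. d (s + \<tau>)) \<in> DS) \<and>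
     (\<forall>d1\<in>DS. \<forall>d2\<in>DS. \<forall>t>0. (\<lambda>s. if s \<le> t then d1 s else d2 (s - t)) \<in> DS) \<and>
     (\<forall>x. \<forall>d\<in>DS. \<phi> 0 x d = x) \<and>
     (\<forall>t\<ge>0. \<forall>x. \<forall>d\<in>DS. \<forall>d'\<in>DS. (\<forall>s\<in>{0..t}. d s = d' s) \<longrightarrow> \<phi> t x d = \<phi> t x d') \<and>
     (\<forall>x. \<forall>d\<in>DS. continuous_on {0..} (\<lambda>t. \<phi> t x d)) \<and>
     (\<forall>x. \<forall>d\<in>DS. \<forall>t\<ge>0. \<forall>h\<ge>0. \<phi> h (\<phi> t x d) (\<lambda>s. d (t + s)) = \<phi> (t + h) x d)"

definition RFC :: "(real \<Rightarrow> 'd) set \<Rightarrow> (real \<Rightarrow> 'x::real_normed_vector \<Rightarrow> (real \<Rightarrow> 'd) \<Rightarrow> 'x) \<Rightarrow> bool" where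
  "RFC DS \<phi> \<longleftrightarrow> (\<forall>C>0. \<forall>\<tau>>0. \<exists>M. \<forall>x d t. norm x \<le> C \<longrightarrow> d \<in> DS \<longrightarrow> t \<in> {0..\<tau>} \<longrightarrow> norm (\<phi> t x d) \<le> M)"

definition dini_deriv ::
  "(real \<Rightarrow> 'x \<Rightarrow> (real \<Rightarrow> 'd) \<Rightarrow> 'x) \<Rightarrow> ('x \<Rightarrow> real) \<Rightarrow> 'x \<Rightarrow> (real \<Rightarrow> 'd) \<Rightarrow> ereal" where
  "dini_deriv \<phi> V x d = Liminf (at_right 0) (\<lambda>t. ereal ((V (\<phi> t x d) - V x) / t))"

definition noncoercive_lyapunov ::
  "(real \<Rightarrow> 'd) set \<Rightarrow> (real \<Rightarrow> 'x::real_normed_vector \<Rightarrow> (real \<Rightarrow> 'd) \<Rightarrow> 'x) \<Rightarrow> 'x set \<Rightarrow> ('x \<Rightarrow> real) \<Rightarrow> bool"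
where
  "noncoercive_lyapunov DS \<phi> A V \<longleftrightarrow>
     continuous_on UNIV V \<and> (\<forall>x. 0 \<le> V x) \<and> (\<forall>x\<in>A. V x = 0) \<and>
     (\<exists>\<psi>2 \<alpha>. class_K_inf \<psi>2 \<and> class_K \<alpha> \<and>
        (\<forall>x. x \<notin> A \<longrightarrow> 0 < V x \<and> V x \<le> \<psi>2 (infdist x A)) \<and>
        (\<forall>x. x \<notin> A \<longrightarrow> (\<forall>d\<in>DS. dini_deriv \<phi> V x d \<le> ereal (- \<alpha> (infdist x A)))))"

end

theory Submission
  imports Defs
begin

lemma dini_mono:
  fixes v :: "real \<Rightarrow> real"
  assumes ab: "a \<le> b" and cont: "continuous_on {a..b} v" and k: "k > 0"
   and D: "\<forall>u\<in>{a<..<b}. Liminf (at_right 0) (\<lambda>h. ereal ((v (u+h) - v u)/h)) < ereal (-k)"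
  shows "v b + k*b \<le> v a + k*a"
proof (rule ccontr)
  assume H: "\<not> ?thesis"
  define w where "w u = v u + k*u" for u
  have wc: "continuous_on {a..b} w" unfolding w_def by (intro continuous_intros cont)
  define c where "c = (w a + w b)/2"
  have wa: "w a < c" and wb: "c < w b" using H by (auto simp: w_def c_def algebra_simps)
  define T where "T = {u\<in>{a..b}. w u \<le> c}"
  have Tcl: "closed T" unfolding T_def
    by (rule continuous_on_closed_Collect_le[OF wc continuous_on_const]) simp
  have aT: "a \<in> T" using wa ab by (simp add: T_def)
  have bdd: "bdd_above T" unfolding T_def by (auto intro: bdd_aboveI[of _ b])
  define u0 where "u0 = Sup T"
  have u0T: "u0 \<in> T" unfolding u0_def using closed_contains_Sup[OF _ bdd Tcl] aT by blast
  have u0le: "\<forall>u\<in>T. u \<le> u0" unfolding u0_def using bdd by (auto intro: cSup_upper)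
  have "a < b" using ab H by (cases "a = b") auto
  obtain \<delta> where \<delta>: "\<delta> > 0" "\<forall>x'\<in>{a..b}. dist x' a < \<delta> \<longrightarrow> dist (w x') (w a) < c - w a"
    using wc ab wa unfolding continuous_on_iff by (metis atLeastAtMost_iff diff_gt_0_iff_gt order_refl)
  define a' where "a' = min (a + \<delta>/2) ((a+b)/2)"
  have a'1: "a < a'" "a' \<le> b" using \<delta> \<open>a < b\<close> unfolding a'_def by (auto simp: min_def)
  have "dist a' a < \<delta>" using \<delta> a'1 by (auto simp: a'_def dist_real_def)
  then have "dist (w a') (w a) < c - w a" using \<delta> a'1 by auto
  then have "w a' \<le> c" by (auto simp: dist_real_def)
  then have "a' \<in> T" using a'1 by (auto simp: T_def)
  then have "a < u0" using u0le a'1 by force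
  have "u0 \<noteq> b" using u0T wb by (auto simp: T_def)
  then have "u0 < b" using u0T by (auto simp: T_def)
  have wu0: "w u0 \<le> c" using u0T by (auto simp: T_def)
  have ev: "eventually (\<lambda>h. ereal (-k) \<le> ereal ((v (u0+h) - v u0)/h)) (at_right 0)"
    unfolding eventually_at_right_field
  proof (intro exI[of _ "b - u0"] conjI allI impI)
    show "b - u0 > 0" using \<open>u0 < b\<close> by simp
    fix h :: real assume h: "0 < h" "h < b - u0"
    have "u0 + h \<notin> T" using u0le h by force
    then have "w (u0+h) > c" using h \<open>a < u0\<close> by (auto simp: T_def)
    then have "w (u0+h) - w u0 > 0" using wu0 by simp
    then have "v (u0+h) - v u0 + k*h > 0" by (simp add: w_def algebra_simps)
    then have "(v (u0+h) - v u0)/h > -k" using h by (simp add: field_simps)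
    then show "ereal (-k) \<le> ereal ((v (u0+h) - v u0)/h)" by simp
  qed
  have "ereal (-k) \<le> Liminf (at_right 0) (\<lambda>h. ereal ((v (u0+h) - v u0)/h))"
    using Liminf_mono[OF ev] by (simp add: Liminf_const)
  moreover have "u0 \<in> {a<..<b}" using \<open>a < u0\<close> \<open>u0 < b\<close> by simp
  ultimately show False using D by force
qed

definition ramp :: "real \<Rightarrow> real" where "ramp u = max 0 (min 1 u)"

definition Kf :: "(nat \<Rightarrow> real) \<Rightarrow> real \<Rightarrow> real" where
  "Kf c r = r + (\<Sum>m<nat \<lceil>r\<rceil>. c m * ramp (r - real m))"

lemma Kf_eq:
  assumes "r \<le> real N"
  shows "Kf c r = r + (\<Sum>m<N. c m * ramp (r - real m))"
proof -
  have "(\<Sum>m<N. c m * ramp (r - real m)) = (\<Sum>m<nat \<lceil>r\<rceil>. c m * ramp (r - real m))"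
  proof (cases "nat \<lceil>r\<rceil> \<le> N")
    case True
    show ?thesis
    proof (rule sum.mono_neutral_right)
      show "\<forall>i\<in>{..<N} - {..<nat \<lceil>r\<rceil>}. c i * ramp (r - real i) = 0"
        by (auto simp: ramp_def)
    qed (use True in auto)
  next
    case False
    then show ?thesis using assms by linarith
  qed
  then show ?thesis by (simp add: Kf_def)
qed

lemma Kf_cont: "continuous_on UNIV (Kf c)"
proof -
  have "isCont (Kf c) r" for r
  proof -
    define N where "N = nat \<lceil>\<bar>r\<bar>\<rceil> + 1"
    have rN: "r < real N" unfolding N_def by linarith
    have ev: "eventually (\<lambda>x. Kf c x = x + (\<Sum>m<N. c m * ramp (x - real m))) (nhds r)"
      using eventually_nhds_in_open[of "{..<real N}" r] rN
      by (auto elim!: eventually_mono intro!: Kf_eq)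
    have "isCont (\<lambda>x. x + (\<Sum>m<N. c m * ramp (x - real m))) r"
      unfolding ramp_def by (intro continuous_intros)
    then show ?thesis using isCont_cong[OF ev] by simp
  qed
  then show ?thesis by (simp add: continuous_on_eq_continuous_at)
qed

lemma ramp_mono: "x \<le> y \<Longrightarrow> ramp x \<le> ramp y" by (auto simp: ramp_def)

lemma Kf_smono:
  assumes "\<forall>m. c m \<ge> 0" "r < s"
  shows "Kf c r < Kf c s"
proof -
  define N where "N = nat \<lceil>\<bar>s\<bar>\<rceil> + nat \<lceil>\<bar>r\<bar>\<rceil>"
  have "r \<le> real N" "s \<le> real N" unfolding N_def by linarith+
  moreover have "(\<Sum>m<N. c m * ramp (r - real m)) \<le> (\<Sum>m<N. c m * ramp (s - real m))"
    using assms by (intro sum_mono mult_left_mono ramp_mono) auto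
  ultimately show ?thesis using assms Kf_eq[of r N c] Kf_eq[of s N c] by simp
qed

lemma Kf_0: "Kf c 0 = 0" by (simp add: Kf_def)

lemma Kf_lower:
  assumes "\<forall>m. c m \<ge> 0" "r \<ge> real m + 1"
  shows "Kf c r \<ge> c m"
proof -
  define N where "N = nat \<lceil>r\<rceil>"
  have rN: "r \<le> real N" "m < N" unfolding N_def using assms by linarith+
  have "c m = c m * ramp (r - real m)" using assms by (simp add: ramp_def)
  also have "\<dots> \<le> (\<Sum>m<N. c m * ramp (r - real m))"
    using rN assms by (intro member_le_sum) (auto simp: ramp_def)
  finally show ?thesis using rN assms by (simp add: Kf_eq)
qed


theorem corollary24:
  fixes Dset :: "'d::real_normed_vector set"
    and DS :: "(real \<Rightarrow> 'd) set"
    and \<phi> :: "real \<Rightarrow> 'x::real_normed_vector \<Rightarrow> (real \<Rightarrow> 'd) \<Rightarrow> 'x"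
    and A :: "'x set"
  assumes "is_system Dset DS \<phi>"
    and "RFC DS \<phi>"
    and "bounded A"
    and "\<exists>V. noncoercive_lyapunov DS \<phi> A V"
  shows "\<exists>\<beta> c. class_KL \<beta> \<and> c > 0 \<and>
           (\<forall>x. \<forall>d\<in>DS. \<forall>t\<ge>0. norm (\<phi> t x d) \<le> \<beta> (norm x) t + c)"
proof -
  have sys: "\<forall>d\<in>DS. \<forall>\<tau>\<ge>0. (\<lambda>s. d (s + \<tau>)) \<in> DS"
    "\<forall>x. \<forall>d\<in>DS. \<phi> 0 x d = x"
    "\<forall>x. \<forall>d\<in>DS. continuous_on {0..} (\<lambda>t. \<phi> t x d)"
    "\<forall>x. \<forall>d\<in>DS. \<forall>t\<ge>0. \<forall>h\<ge>0. \<phi> h (\<phi> t x d) (\<lambda>s. d (t + s)) = \<phi> (t + h) x d"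
    using assms(1) unfolding is_system_def by blast+
  have shift: "(\<lambda>s. d (t + s)) \<in> DS" if "d \<in> DS" "t \<ge> 0" for d t
    using sys(1) that by (metis (no_types, lifting) add.commute ext)
  obtain V \<psi>2 \<alpha> where Vc: "continuous_on UNIV V" and Vnn: "\<forall>x. 0 \<le> V x" and VA: "\<forall>x\<in>A. V x = 0"
    and \<psi>2: "class_K_inf \<psi>2" and \<alpha>: "class_K \<alpha>"
    and Vb: "\<forall>x. x \<notin> A \<longrightarrow> 0 < V x \<and> V x \<le> \<psi>2 (infdist x A)"
    and Vd: "\<forall>x. x \<notin> A \<longrightarrow> (\<forall>d\<in>DS. dini_deriv \<phi> V x d \<le> ereal (- \<alpha> (infdist x A)))"
    using assms(4) unfolding noncoercive_lyapunov_def by blast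
  have \<psi>2m: "strict_mono_on {0..} \<psi>2" "\<psi>2 0 = 0" using \<psi>2 unfolding class_K_inf_def class_K_def by auto
  have \<psi>2mono: "\<psi>2 x \<le> \<psi>2 y" if "0 \<le> x" "x \<le> y" for x y
    using \<psi>2m(1) that by (cases "x = y") (auto simp: strict_mono_on_def intro!: less_imp_le)
  have \<psi>2nn: "0 \<le> \<psi>2 x" if "0 \<le> x" for x using \<psi>2mono[of 0 x] that \<psi>2m by simp
  have \<alpha>m: "strict_mono_on {0..} \<alpha>" "\<alpha> 0 = 0" using \<alpha> unfolding class_K_def by auto
  have \<alpha>1: "\<alpha> 1 > 0" using \<alpha>m by (metis atLeast_iff strict_mono_onD zero_less_one order_refl zero_le_one)
  define k where "k = \<alpha> 1 / 2"
  have k: "k > 0" using \<alpha>1 by (simp add: k_def)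
  have Vle: "V x \<le> \<psi>2 (infdist x A)" for x
    using Vb VA \<psi>2nn[OF infdist_nonneg] \<psi>2m by (cases "x \<in> A") auto
  have "A \<noteq> {}"
  proof
    assume "A = {}"
    then have "0 < V 0 \<and> V 0 \<le> \<psi>2 0" using Vb by (simp add: infdist_def)
    then show False using \<psi>2m by linarith
  qed
  then obtain a0 where a0: "a0 \<in> A" by blast
  obtain R where R: "R > 0" "\<forall>a\<in>A. norm a \<le> R" using assms(3) bounded_pos by blast
  have idle: "infdist x A \<le> norm x + R" for x
    using infdist_le[OF a0, of x] R a0 norm_triangle_ineq4[of x a0] by (force simp: dist_norm)
  have close: "norm y \<le> R + 2" if "infdist y A \<le> 1" for y
  proof -
    have "(INF a\<in>A. dist y a) < 2" using that infdist_notempty[OF \<open>A \<noteq> {}\<close>] by simp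
    then obtain a where "a \<in> A" "dist y a < 2" using cINF_less_iff[OF \<open>A \<noteq> {}\<close> bdd_below_image_dist[of y A], of 2]
      by auto
    then show ?thesis using R norm_triangle_ineq[of "y - a" a] by (force simp: dist_norm)
  qed
  define M where "M C \<tau> = (SOME M. \<forall>x d t. norm x \<le> C \<longrightarrow> d \<in> DS \<longrightarrow> t \<in> {0..\<tau>} \<longrightarrow> norm (\<phi> t x d) \<le> M)" for C \<tau>
  have M: "norm (\<phi> t x d) \<le> M C \<tau>" if "C > 0" "\<tau> > 0" "norm x \<le> C" "d \<in> DS" "0 \<le> t" "t \<le> \<tau>" for C \<tau> x d t
  proof -
    have "\<exists>M. \<forall>x d t. norm x \<le> C \<longrightarrow> d \<in> DS \<longrightarrow> t \<in> {0..\<tau>} \<longrightarrow> norm (\<phi> t x d) \<le> M"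
      using assms(2) that unfolding RFC_def by blast
    from someI_ex[OF this] show ?thesis using that unfolding M_def by auto
  qed
  have Dtraj: "Liminf (at_right 0) (\<lambda>h. ereal ((V (\<phi> (u+h) x d) - V (\<phi> u x d))/h)) < ereal (-k)"
    if "d \<in> DS" "u \<ge> 0" "infdist (\<phi> u x d) A > 1" for x d u
  proof -
    define y where "y = \<phi> u x d"
    define d' where "d' = (\<lambda>s. d (u + s))"
    have d': "d' \<in> DS" using shift that by (simp add: d'_def)
    have yA: "y \<notin> A" using that by (auto simp: y_def)
    have "dini_deriv \<phi> V y d' \<le> ereal (- \<alpha> (infdist y A))" using Vd yA d' by blast
    also have "\<dots> \<le> ereal (- \<alpha> 1)"
      using that \<alpha>m(1) by (auto simp: y_def strict_mono_on_def intro!: less_imp_le)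
    also have "\<dots> < ereal (-k)" using \<alpha>1 by (simp add: k_def)
    finally have *: "dini_deriv \<phi> V y d' < ereal (-k)" .
    have "eventually (\<lambda>h. ereal ((V (\<phi> h y d') - V y)/h) = ereal ((V (\<phi> (u+h) x d) - V (\<phi> u x d))/h)) (at_right 0)"
      unfolding eventually_at_right_field
      by (rule exI[of _ 1]) (use sys(4) that in \<open>auto simp: y_def d'_def\<close>)
    from Liminf_eq[OF this] show ?thesis using * unfolding dini_deriv_def y_def by simp
  qed
  have vcont: "continuous_on {a..b} (\<lambda>u. V (\<phi> u x d))" if "d \<in> DS" "0 \<le> a" for a b x d
  proof -
    have "continuous_on {a..b} (\<lambda>u. \<phi> u x d)"
      using sys(3) that by (rule_tac continuous_on_subset) auto
    then show ?thesis using Vc by (rule_tac continuous_on_compose2[of UNIV V]) auto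
  qed
  define \<tau>0 where "\<tau>0 = \<psi>2 1 / k + 1"
  have \<tau>0: "\<tau>0 > 0" using \<psi>2nn[of 1] k unfolding \<tau>0_def by (smt (verit) divide_nonneg_pos)
  define c' where "c' = M (R + 2) \<tau>0"
  have F: "norm (\<phi> t x d) \<le> c' \<or> t \<le> V x / k" if "d \<in> DS" "t \<ge> 0" for x d t
  proof -
    define S where "S = {s\<in>{0..t}. infdist (\<phi> s x d) A \<le> 1}"
    show ?thesis
    proof (cases "S = {}")
      case True
      have "V (\<phi> t x d) + k*t \<le> V (\<phi> 0 x d) + k*0"
        apply (rule dini_mono[OF that(2) vcont[OF that(1)] k])
        using True by (auto simp: S_def not_le intro!: Dtraj[OF that(1)]) (metis order.asym)
      then have "k * t \<le> V x" using sys(2) that Vnn[rule_format, of "\<phi> t x d"] by simp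
      then show ?thesis using k by (simp add: field_simps)
    next
      case False
      have Scl: "closed S" unfolding S_def
        apply (rule continuous_on_closed_Collect_le)
          apply (rule continuous_on_compose2[OF continuous_on_infdist[OF continuous_on_id]])
        using sys(3) that by (auto intro: continuous_on_subset[of "{0..}"])
      have bdd: "bdd_above S" unfolding S_def by (auto intro: bdd_aboveI[of _ t])
      define s0 where "s0 = Sup S"
      have s0S: "s0 \<in> S" unfolding s0_def using closed_contains_Sup[OF False bdd Scl] .
      have s0le: "\<forall>u\<in>S. u \<le> s0" unfolding s0_def using bdd by (auto intro: cSup_upper)
      have s0: "0 \<le> s0" "s0 \<le> t" "infdist (\<phi> s0 x d) A \<le> 1" using s0S by (auto simp: S_def)
      have "V (\<phi> t x d) + k*t \<le> V (\<phi> s0 x d) + k * s0"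
        apply (rule dini_mono[OF s0(2) vcont[OF that(1) s0(1)] k])
      proof
        fix u assume u: "u \<in> {s0<..<t}"
        then have "u \<notin> S" using s0le by force
        then have "infdist (\<phi> u x d) A > 1" using u s0 by (auto simp: S_def)
        then show "Liminf (at_right 0) (\<lambda>h. ereal ((V (\<phi> (u+h) x d) - V (\<phi> u x d))/h)) < ereal (-k)"
          using Dtraj[OF that(1)] u s0 by auto
      qed
      moreover have "V (\<phi> s0 x d) \<le> \<psi>2 1"
        using Vle[of "\<phi> s0 x d"] \<psi>2mono[OF infdist_nonneg s0(3)] by linarith
      ultimately have "k * (t - s0) \<le> \<psi>2 1" using Vnn[rule_format, of "\<phi> t x d"]
        by (simp add: algebra_simps)
      then have ts: "t - s0 \<le> \<tau>0" using k by (simp add: \<tau>0_def field_simps)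
      have eq: "\<phi> t x d = \<phi> (t - s0) (\<phi> s0 x d) (\<lambda>s. d (s0 + s))"
        using sys(4) that s0 by auto
      have "norm (\<phi> (t - s0) (\<phi> s0 x d) (\<lambda>s. d (s0 + s))) \<le> c'"
        unfolding c'_def
        by (rule M) (use R \<tau>0 close s0 ts shift that in auto)
      then show ?thesis using eq by simp
    qed
  qed
  define T where "T n = \<psi>2 (real n + R) / k" for n :: nat
  have Tnn: "T n \<ge> 0" for n using \<psi>2nn[of "real n + R"] R k by (simp add: T_def)
  define B where "B n = M (real n) (T n + 1)" for n :: nat
  have Bb: "norm (\<phi> t x d) \<le> B n"
    if "n \<ge> 1" "norm x \<le> real n" "d \<in> DS" "0 \<le> t" "t \<le> V x / k" for n x d t
  proof -
    have "V x \<le> \<psi>2 (real n + R)"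
      using Vle[of x] \<psi>2mono[OF infdist_nonneg, of x A "real n + R"] idle[of x] that by linarith
    then have "V x / k \<le> T n" using k by (simp add: T_def divide_right_mono)
    then show ?thesis unfolding B_def by (rule_tac M) (use that Tnn in auto)
  qed
  define cc where "cc m = max 0 (B (m+2)) * exp (T (m+2))" for m
  have cc0: "\<forall>m. cc m \<ge> 0" by (simp add: cc_def)
  define c where "c = max c' (max 0 (B 1)) + 1"
  define \<beta> where "\<beta> r t = Kf cc r * exp (-t)" for r t
  have Kc: "continuous_on UNIV (Kf cc)" by (rule Kf_cont)
  have Knn: "Kf cc r \<ge> 0" if "r \<ge> 0" for r
    using Kf_smono[OF cc0, of 0 r] Kf_0 that by (cases "r = 0") auto
  have KL: "class_KL \<beta>"
    unfolding class_KL_def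
  proof (intro conjI)
    show "continuous_on ({0..} \<times> {0..}) (\<lambda>(r, t). \<beta> r t)"
      unfolding \<beta>_def case_prod_unfold
      by (intro continuous_intros continuous_on_compose2[OF Kc]) auto
    show "\<forall>t\<ge>0. class_K (\<lambda>r. \<beta> r t)"
      unfolding class_K_def \<beta>_def
      by (auto intro!: continuous_intros continuous_on_compose2[OF Kc] simp: strict_mono_on_def Kf_0 Kf_smono[OF cc0])
    show "\<forall>r>0. (\<forall>s t. 0 \<le> s \<longrightarrow> s < t \<longrightarrow> \<beta> r t < \<beta> r s) \<and> ((\<lambda>t. \<beta> r t) \<longlongrightarrow> 0) at_top"
    proof (rule allI, rule impI, rule conjI)
      fix r :: real assume r: "0 < r"
      have Kp: "Kf cc r > 0" using Kf_smono[OF cc0 r] Kf_0 by simp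
      show "\<forall>s t. 0 \<le> s \<longrightarrow> s < t \<longrightarrow> \<beta> r t < \<beta> r s"
        using Kp by (auto simp: \<beta>_def)
      have "((\<lambda>t. exp (-t)) \<longlongrightarrow> (0::real)) at_top"
        using filterlim_compose[OF exp_at_bot filterlim_uminus_at_bot_at_top] by simp
      then show "((\<lambda>t. \<beta> r t) \<longlongrightarrow> 0) at_top"
        unfolding \<beta>_def by (rule tendsto_mult_right_zero)
    qed
  qed
  have c: "c > 0" by (simp add: c_def)
  have main: "norm (\<phi> t x d) \<le> \<beta> (norm x) t + c" if "d \<in> DS" "t \<ge> 0" for x d t
  proof -
    have bnn: "\<beta> (norm x) t \<ge> 0" using Knn[of "norm x"] by (simp add: \<beta>_def)
    show ?thesis
    proof (cases "norm (\<phi> t x d) \<le> c'")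
      case True then show ?thesis using bnn by (simp add: c_def)
    next
      case False
      then have tV: "t \<le> V x / k" using F that by blast
      show ?thesis
      proof (cases "norm x \<le> 1")
        case True
        then have "norm (\<phi> t x d) \<le> B 1" using Bb[of 1 x d t] that tV by simp
        then show ?thesis using bnn by (simp add: c_def)
      next
        case False
        define m where "m = nat \<lfloor>norm x\<rfloor> - 1"
        have m1: "norm x \<ge> real m + 1" "norm x \<le> real (m+2)" using False unfolding m_def by linarith+
        have "norm (\<phi> t x d) \<le> B (m+2)" using Bb[of "m+2" x d t] that tV m1 by simp
        also have "\<dots> \<le> max 0 (B (m+2)) * exp (T (m+2) - t)"
        proof -
          have "V x \<le> \<psi>2 (real (m+2) + R)"
            using Vle[of x] \<psi>2mono[OF infdist_nonneg, of x A "real (m+2) + R"] idle[of x] m1 by linarith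
          then have "t \<le> T (m+2)" using tV k by (simp add: T_def) (smt (verit) divide_right_mono)
          then have "exp (T (m+2) - t) \<ge> 1" by simp
          then show ?thesis by (smt (verit) mult_left_mono mult_cancel_left1)
        qed
        also have "\<dots> = cc m * exp (-t)" by (simp add: cc_def exp_diff exp_minus field_simps)
        also have "\<dots> \<le> Kf cc (norm x) * exp (-t)" using Kf_lower[OF cc0 m1(1)] by simp
        finally show ?thesis using c by (simp add: \<beta>_def)
      qed
    qed
  qed
  show ?thesis using KL c main by blast
qed

end
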